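(* In ${\rm Br}({\rm G}_2)$ the following equalities hold: $$r_0r_1e_0=e_1e_0,\qquad e_0r_1r_0=e_0e_1,\qquad e_0e_1e_0=\delta^2e_0,\qquad r_1r_0e_1r_0r_1e_0=\delta e_0.$$
   Context: Let $\delta$ be an indeterminate. ${\rm Br}({\rm G}_2)$ is the $\mathbb{Z}[\delta^{\pm1}]$-algebra generated by $r_0,r_1,e_0,e_1$ subject to the following relations: - $r_0^2=r_1^2=1$; - $r_ie_i=e_ir_i=e_i$ for $i=0,1$; - $e_0^2=\delta^3e_0$ and $e_1^2=\delta e_1$; - $r_0e_1e_0=r_1e_0$ and $e_0e_1r_0=e_0r_1$; - $e_1r_0e_1r_0e_1=e_1$ and $e_1r_0e_1r_0r_1=e_1r_0r_1r_0$; - $e_0r_1e_0=\delta^2e_0$; - $r_1r_0e_1r_0e_1=r_0r_1r_0e_1$; - $(r_1r_0)^6=1$. *)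

theory Defs
  imports Main
begin

text \<open>A family (d, r0, r1, e0, e1) in a unital (not necessarily commutative) ring
  satisfies the defining relations of Br(G2) over Z[delta, delta^-1] when d is a central
  unit (the image of the indeterminate delta) and the generator relations hold.
  Br(G2) is the universal such ring, so an identity holds in Br(G2) iff it holds for
  every such family in every ring.\<close>
definition brG2_rels :: "'a::ring_1 \<Rightarrow> 'a \<Rightarrow> 'a \<Rightarrow> 'a \<Rightarrow> 'a \<Rightarrow> bool" where
  "brG2_rels d r0 r1 e0 e1 \<longleftrightarrow>
     (\<forall>x. d * x = x * d) \<and> (\<exists>d'. d' * d = 1 \<and> d * d' = 1) \<and>
     r0 * r0 = 1 \<and> r1 * r1 = 1 \<and>
     r0 * e0 = e0 \<and> e0 * r0 = e0 \<and> r1 * e1 = e1 \<and> e1 * r1 = e1 \<and>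
     e0 * e0 = d ^ 3 * e0 \<and> e1 * e1 = d * e1 \<and>
     r0 * e1 * e0 = r1 * e0 \<and> e0 * e1 * r0 = e0 * r1 \<and>
     e1 * r0 * e1 * r0 * e1 = e1 \<and> e1 * r0 * e1 * r0 * r1 = e1 * r0 * r1 * r0 \<and>
     e0 * r1 * e0 = d ^ 2 * e0 \<and>
     r1 * r0 * e1 * r0 * e1 = r0 * r1 * r0 * e1 \<and>
     (r1 * r0) ^ 6 = 1"

end

theory Submission
  imports Defs
begin

theorem lemma9p2:
  fixes d r0 r1 e0 e1 :: "'a::ring_1"
  assumes "brG2_rels d r0 r1 e0 e1"
  shows "r0 * r1 * e0 = e1 * e0 \<and> e0 * r1 * r0 = e0 * e1 \<and>
         e0 * e1 * e0 = d ^ 2 * e0 \<and> r1 * r0 * e1 * r0 * r1 * e0 = d * e0"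
proof -
  note A = assms[unfolded brG2_rels_def]
  have c: "\<And>x. d * x = x * d" using A by blast
  have r00: "r0 * r0 = 1" and r11: "r1 * r1 = 1" and e0r0: "e0 * r0 = e0"
    and e11: "e1 * e1 = d * e1" and h1: "r0 * e1 * e0 = r1 * e0"
    and h2: "e0 * e1 * r0 = e0 * r1" and h3: "e0 * r1 * e0 = d ^ 2 * e0"
    using A by auto
  have h1a: "r0 * (e1 * e0) = r1 * e0" using h1 by (simp add: mult.assoc)
  have r00a: "r0 * (r0 * x) = x" for x by (simp add: mult.assoc[symmetric] r00)
  have r11a: "r1 * (r1 * x) = x" for x by (simp add: mult.assoc[symmetric] r11)
  have e11a: "e1 * (e1 * x) = d * (e1 * x)" for x by (simp add: mult.assoc[symmetric] e11)
  have g1: "r0 * r1 * e0 = e1 * e0"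
  proof -
    have "e1 * e0 = (r0 * r0) * e1 * e0" by (simp add: r00)
    also have "\<dots> = r0 * (r0 * e1 * e0)" by (simp add: mult.assoc)
    also have "\<dots> = r0 * r1 * e0" by (simp add: h1a mult.assoc)
    finally show ?thesis by simp
  qed
  have g2: "e0 * r1 * r0 = e0 * e1"
  proof -
    have "e0 * e1 = e0 * e1 * (r0 * r0)" by (simp add: r00)
    also have "\<dots> = (e0 * e1 * r0) * r0" by (simp add: mult.assoc)
    also have "\<dots> = e0 * r1 * r0" by (simp add: h2)
    finally show ?thesis by simp
  qed
  have g3: "e0 * e1 * e0 = d ^ 2 * e0"
  proof -
    have "e0 * e1 * e0 = e0 * (e1 * e0)" by (simp add: mult.assoc)
    also have "\<dots> = (e0 * r0) * r1 * e0" by (simp add: g1[symmetric] mult.assoc)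
    also have "\<dots> = d ^ 2 * e0" by (simp add: e0r0 h3)
    finally show ?thesis .
  qed
  have g4: "r1 * r0 * e1 * r0 * r1 * e0 = d * e0"
  proof -
    have "r1 * r0 * e1 * r0 * r1 * e0 = r1 * r0 * e1 * r0 * (r0 * e1 * e0)"
      by (simp add: h1a mult.assoc)
    also have "\<dots> = r1 * r0 * (e1 * e1) * e0" by (simp add: mult.assoc r00a)
    also have "\<dots> = d * (r1 * r0 * e1 * e0)" by (simp add: e11a c mult.assoc)
    also have "\<dots> = d * (r1 * (r0 * r0 * r1 * e0))" by (simp add: g1[symmetric] mult.assoc)
    also have "\<dots> = d * e0" by (simp add: r00a r11a mult.assoc)
    finally show ?thesis .
  qed
  show ?thesis using g1 g2 g3 g4 by blast
qed

end
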